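(* Let $\mathfrak g=\mathfrak{osp}(m|2n)\cong\mathfrak{spo}(2n|m)$ and let $\Phi$ be the composition of $\mathfrak g$-module morphisms $$\mathfrak g\wedge\mathfrak g\otimes\mathfrak g\hookrightarrow\mathfrak g\otimes\mathfrak g\otimes\mathfrak g\xrightarrow{\ \mathrm{id}\otimes\Pi_2\ }\mathfrak g\otimes(\mathfrak g\circledcirc_2\mathfrak g),$$ where $\Pi_2(X\otimes Y)=X\circledcirc_2Y$. Then $\dim\mathrm{Hom}_{\mathfrak g}(\mathfrak g,\ker\Phi)\ge1$.
   Context: Conventions: $\mathbb C^{m|2n}$ with parity $[a]=0$ for $a\le m$, else $1$; orthosymplectic metric $g_{ab}$ (invertible, even, $g_{ba}=(-1)^{[a][b]}g_{ab}$), $g^{ab}=g_{ab}$, raising/lowering by $V_a=\sum_bg_{ab}V^b$, $V^c=\sum_ag^{ac}V_a$; standing assumption $m>4$, $n>1$. $\mathfrak g$ = tensors $A^{ab}=-(-1)^{[a][b]}A^{ba}$; $\mathfrak g\otimes\mathfrak g$ = tensors $T^{abcd}$ super-antisymmetric in $(a,b)$ and $(c,d)$; $\mathfrak g\odot\mathfrak g$ (resp. $\mathfrak g\wedge\mathfrak g$) those with $T^{abcd}=\pm(-1)^{([a]+[b])([c]+[d])}T^{cdab}$ (sign $+$, resp. $-$). Let $s$ be the supersymmetrization $s(T)^{abcd}=\frac12(T^{abcd}+(-1)^{([a]+[b])([c]+[d])}T^{cdab})$ and $q(V)^{abcd}=\frac13(V^{abcd}+(-1)^{[a]([b]+[c])}V^{bcad}-(-1)^{[b][c]}V^{acbd})$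 on $\mathfrak g\odot\mathfrak g$; $q$ is a $\mathfrak g$-equivariant idempotent. The second Cartan product is $\mathfrak g\circledcirc_2\mathfrak g=\mathrm{Im}(q)$ (the irreducible module of highest weight $4\delta_1$ for the standard positive system, i.e. the Cartan product in $\mathfrak{spo}(2n|m)\otimes\mathfrak{spo}(2n|m)$), and $X\circledcirc_2Y:=q(s(X\otimes Y))$, the projection along $\ker q\oplus\mathfrak g\wedge\mathfrak g$. *)

theory Defs
  imports Complex_Main
begin

text \<open>Super vector space C^(m|2n) with basis indices 0..<m+2n; index a is even iff a < m.
  Tensors are functions from index lists to complex numbers (components T^(a1...ak)),
  representing sum T^(a1..ak) e_a1 (x) ... (x) e_ak.\<close>

definition dimV :: "nat \<Rightarrow> nat \<Rightarrow> nat" where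
  "dimV m n = m + 2 * n"

definition par :: "nat \<Rightarrow> nat \<Rightarrow> nat" where
  "par m a = (if a < m then 0 else 1)"

definition psum :: "nat \<Rightarrow> nat list \<Rightarrow> nat" where
  "psum m xs = sum_list (map (par m) xs)"

definition sg :: "nat \<Rightarrow> complex" where
  "sg k = (-1) ^ k"

text \<open>Orthosymplectic metric g_ab: even, graded symmetric, and g^ab = g_ab is its inverse
  (raising after lowering is the identity).\<close>
definition osp_metric :: "nat \<Rightarrow> nat \<Rightarrow> (nat \<Rightarrow> nat \<Rightarrow> complex) \<Rightarrow> bool" where
  "osp_metric m n G \<longleftrightarrow>
     (\<forall>a b. (dimV m n \<le> a \<or> dimV m n \<le> b \<or> par m a \<noteq> par m b) \<longrightarrow> G a b = 0) \<and>
     (\<forall>a b. G b a = sg (par m a * par m b) * G a b) \<and>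
     (\<forall>b c. b < dimV m n \<longrightarrow> c < dimV m n \<longrightarrow>
        (\<Sum>a<dimV m n. G a c * G a b) = (if c = b then 1 else 0))"

definition is_tensor :: "nat \<Rightarrow> nat \<Rightarrow> nat \<Rightarrow> (nat list \<Rightarrow> complex) \<Rightarrow> bool" where
  "is_tensor m n k T \<longleftrightarrow>
     (\<forall>xs. T xs \<noteq> 0 \<longrightarrow> length xs = k \<and> (\<forall>x\<in>set xs. x < dimV m n))"

definition homog :: "nat \<Rightarrow> nat \<Rightarrow> (nat list \<Rightarrow> complex) \<Rightarrow> bool" where
  "homog m p T \<longleftrightarrow> (\<forall>xs. T xs \<noteq> 0 \<longrightarrow> psum m xs mod 2 = p)"

text \<open>The Lie superalgebra g = osp(m|2n): super-antisymmetric 2-tensors A^ab.\<close>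
definition in_g :: "nat \<Rightarrow> nat \<Rightarrow> (nat list \<Rightarrow> complex) \<Rightarrow> bool" where
  "in_g m n A \<longleftrightarrow> is_tensor m n 2 A \<and>
     (\<forall>a b. A [a, b] = - sg (par m a * par m b) * A [b, a])"

text \<open>Natural action of A (a 2-tensor, acting on V by e_d \<mapsto> sum A^ab g_bd e_a) on k-tensors,
  extended to tensor powers with Koszul signs.\<close>
definition act :: "nat \<Rightarrow> nat \<Rightarrow> (nat \<Rightarrow> nat \<Rightarrow> complex) \<Rightarrow> (nat list \<Rightarrow> complex)
    \<Rightarrow> (nat list \<Rightarrow> complex) \<Rightarrow> (nat list \<Rightarrow> complex)" where
  "act m n G A T = (\<lambda>xs. \<Sum>i<length xs. \<Sum>b<dimV m n. \<Sum>d<dimV m n.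
      A [xs ! i, b] * G b d * sg ((par m (xs ! i) + par m b) * psum m (take i xs)) * T (xs[i := d]))"

text \<open>(g wedge g) tensor g, as 6-tensors T^(abcdef).\<close>
definition in_wedge_g :: "nat \<Rightarrow> nat \<Rightarrow> (nat list \<Rightarrow> complex) \<Rightarrow> bool" where
  "in_wedge_g m n T \<longleftrightarrow> is_tensor m n 6 T \<and>
     (\<forall>a b c d e f.
        T [a,b,c,d,e,f] = - sg (par m a * par m b) * T [b,a,c,d,e,f] \<and>
        T [a,b,c,d,e,f] = - sg (par m c * par m d) * T [a,b,d,c,e,f] \<and>
        T [a,b,c,d,e,f] = - sg (par m e * par m f) * T [a,b,c,d,f,e] \<and>
        T [a,b,c,d,e,f] = - sg ((par m a + par m b) * (par m c + par m d)) * T [c,d,a,b,e,f])"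

definition s_op :: "nat \<Rightarrow> (nat list \<Rightarrow> complex) \<Rightarrow> (nat list \<Rightarrow> complex)" where
  "s_op m T = (\<lambda>xs. case xs of
      [a,b,c,d] \<Rightarrow> (T [a,b,c,d] + sg ((par m a + par m b) * (par m c + par m d)) * T [c,d,a,b]) / 2
    | _ \<Rightarrow> 0)"

definition q_op :: "nat \<Rightarrow> (nat list \<Rightarrow> complex) \<Rightarrow> (nat list \<Rightarrow> complex)" where
  "q_op m V = (\<lambda>xs. case xs of
      [a,b,c,d] \<Rightarrow> (V [a,b,c,d] + sg (par m a * (par m b + par m c)) * V [b,c,a,d]
                    - sg (par m b * par m c) * V [a,c,b,d]) / 3
    | _ \<Rightarrow> 0)"

definition Pi2 :: "nat \<Rightarrow> (nat list \<Rightarrow> complex) \<Rightarrow> (nat list \<Rightarrow> complex)" where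
  "Pi2 m T = q_op m (s_op m T)"

definition Phi :: "nat \<Rightarrow> (nat list \<Rightarrow> complex) \<Rightarrow> (nat list \<Rightarrow> complex)" where
  "Phi m T = (\<lambda>xs. case xs of
      [e,f,a,b,c,d] \<Rightarrow> Pi2 m (\<lambda>ys. T (e # f # ys)) [a,b,c,d]
    | _ \<Rightarrow> 0)"

definition ker_Phi :: "nat \<Rightarrow> nat \<Rightarrow> (nat list \<Rightarrow> complex) \<Rightarrow> bool" where
  "ker_Phi m n T \<longleftrightarrow> in_wedge_g m n T \<and> Phi m T = (\<lambda>_. 0)"

text \<open>Hom_g(g, ker Phi): even linear g-equivariant maps from g to ker Phi
  (values of F outside g are irrelevant).\<close>
definition Hom_g_ker_Phi :: "nat \<Rightarrow> nat \<Rightarrow> (nat \<Rightarrow> nat \<Rightarrow> complex)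
    \<Rightarrow> ((nat list \<Rightarrow> complex) \<Rightarrow> (nat list \<Rightarrow> complex)) set" where
  "Hom_g_ker_Phi m n G = {F.
     (\<forall>X Y. in_g m n X \<longrightarrow> in_g m n Y \<longrightarrow> F (\<lambda>xs. X xs + Y xs) = (\<lambda>xs. F X xs + F Y xs)) \<and>
     (\<forall>X c. in_g m n X \<longrightarrow> F (\<lambda>xs. c * X xs) = (\<lambda>xs. c * F X xs)) \<and>
     (\<forall>X. in_g m n X \<longrightarrow> ker_Phi m n (F X)) \<and>
     (\<forall>X p. in_g m n X \<longrightarrow> homog m p X \<longrightarrow> homog m p (F X)) \<and>
     (\<forall>A X. in_g m n A \<longrightarrow> in_g m n X \<longrightarrow> F (act m n G A X) = act m n G A (F X))}"

end

theory Submission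
  imports Defs "HOL-Library.Multiset"
begin


lemma sg_if: "sg k = (if even k then 1 else -1)"
  by (simp add: sg_def)

lemma par_01: "par m a = 0 \<or> par m a = 1" by (simp add: par_def)

lemma sg_add: "sg (a+b) = sg a * sg b" by (simp add: sg_def power_add)

lemma psum_append: "psum m (xs @ ys) = psum m xs + psum m ys"
  by (simp add: psum_def)

definition swapl :: "nat \<Rightarrow> nat list \<Rightarrow> nat list" where
  "swapl i xs = xs[i := xs ! Suc i, Suc i := xs ! i]"

definition tau :: "nat \<Rightarrow> nat \<Rightarrow> (nat list \<Rightarrow> complex) \<Rightarrow> nat list \<Rightarrow> complex" where
  "tau m i T xs = (if Suc i < length xs then sg (par m (xs!i) * par m (xs!Suc i)) * T (swapl i xs) else T xs)"

lemma mset_swapl: "Suc i < length xs \<Longrightarrow> mset (swapl i xs) = mset xs"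
  unfolding swapl_def by (metis Suc_lessD mset_swap)

lemma psum_mset: "mset xs = mset ys \<Longrightarrow> psum m xs = psum m ys"
  unfolding psum_def by (metis mset_map sum_mset_sum_list)

lemma length_swapl[simp]: "length (swapl i xs) = length xs" by (simp add: swapl_def)

lemma take_swapl: "Suc i < length xs \<Longrightarrow> j \<noteq> Suc i \<Longrightarrow> psum m (take j (swapl i xs)) = psum m (take j xs)"
proof (cases "j \<le> i")
  case True
  assume "Suc i < length xs" 
  then show ?thesis using True by (simp add: swapl_def take_update_cancel)
next
  case False
  assume a: "Suc i < length xs" "j \<noteq> Suc i"
  hence j: "Suc (Suc i) \<le> j" using False by simp
  have "take j (swapl i xs) = swapl i (take j xs)"
    using a j by (simp add: swapl_def take_update_swap nth_take)
  moreover have "mset (swapl i (take j xs)) = mset (take j xs)"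
    using a j by (intro mset_swapl) simp
  ultimately show ?thesis by (metis psum_mset)
qed

lemma sign1: "pb \<le> 1 \<Longrightarrow> px \<le> 1 \<Longrightarrow> py \<le> 1 \<Longrightarrow>
   sg ((px+pb)*P) * sg (pb*py) = sg (px*py) * sg ((px+pb)*(P+py))"
  by (cases "even P"; cases pb; cases px; cases py; simp add: sg_if algebra_simps)

lemma sign2: "pb \<le> 1 \<Longrightarrow> px \<le> 1 \<Longrightarrow> py \<le> 1 \<Longrightarrow>
   sg ((py+pb)*(P+px)) * sg (px*pb) = sg (px*py) * sg ((py+pb)*P)"
  by (cases "even P"; cases pb; cases px; cases py; simp add: sg_if algebra_simps)

lemma par_le1: "par m a \<le> 1" by (simp add: par_def)

lemma sum_split2: "Suc i < L \<Longrightarrow> sum h {..<L} = h i + h (Suc i) + sum h ({..<L} - {i, Suc i})"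
proof -
  assume a: "Suc i < L"
  have "sum h {..<L} = h i + sum h ({..<L} - {i})" using a by (intro sum.remove) auto
  moreover have "sum h ({..<L} - {i}) = h (Suc i) + sum h ({..<L} - {i} - {Suc i})" using a by (intro sum.remove) auto
  moreover have "{..<L} - {i} - {Suc i} = {..<L} - {i, Suc i}" by auto
  ultimately show ?thesis by (simp add: add.assoc)
qed

lemma act_tau:
  assumes Gp: "\<And>b d. G b d \<noteq> 0 \<Longrightarrow> par m b = par m d"
  shows "act m n G A (tau m i T) = tau m i (act m n G A T)"
proof (rule ext)
  fix xs
  show "act m n G A (tau m i T) xs = tau m i (act m n G A T) xs"
  proof (cases "Suc i < length xs")
    case False
    then show ?thesis by (simp add: act_def tau_def)
  next
    case True
    define ys where "ys = swapl i xs"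
    define f where "f j = (\<Sum>b<dimV m n. \<Sum>d<dimV m n. A [xs!j,b] * G b d * sg ((par m (xs!j) + par m b) * psum m (take j xs)) * tau m i T (xs[j:=d]))" for j
    define g where "g j = (\<Sum>b<dimV m n. \<Sum>d<dimV m n. A [ys!j,b] * G b d * sg ((par m (ys!j) + par m b) * psum m (take j ys)) * T (ys[j:=d]))" for j
    define s where "s = sg (par m (xs!i) * par m (xs!Suc i))"
    have lhs: "act m n G A (tau m i T) xs = sum f {..<length xs}" by (simp add: act_def f_def)
    have rhs: "tau m i (act m n G A T) xs = s * sum g {..<length xs}"
      using True by (simp add: act_def tau_def g_def s_def ys_def)
    have fo: "f j = s * g j" if j: "j \<in> {..<length xs} - {i, Suc i}" for j
    proof -
      have j1: "j \<noteq> i" "j \<noteq> Suc i" "j < length xs" using j by auto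
      have e1: "swapl i (xs[j:=d]) = ys[j:=d]" for d
        using j1 True by (simp add: ys_def swapl_def list_update_swap)
      have e2: "ys ! j = xs ! j" using j1 True by (simp add: ys_def swapl_def)
      have e3: "psum m (take j ys) = psum m (take j xs)" using j1 True take_swapl ys_def by simp
      have e4: "tau m i T (xs[j:=d]) = s * T (ys[j:=d])" for d
        using j1 True e1 by (simp add: tau_def s_def)
      show ?thesis unfolding f_def g_def e2 e3 e4 by (simp add: sum_distrib_left algebra_simps)
    qed
    have fi: "f i = s * g (Suc i)"
    proof -
      have e1: "swapl i (xs[i:=d]) = ys[Suc i:=d]" for d
        using True by (simp add: ys_def swapl_def list_update_swap)
      have e2: "ys ! Suc i = xs ! i" using True by (simp add: ys_def swapl_def)
      have e3: "psum m (take (Suc i) ys) = psum m (take i xs) + par m (xs ! Suc i)"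
      proof -
        have "take (Suc i) ys = take i xs @ [xs ! Suc i]"
          using True by (simp add: ys_def swapl_def take_Suc_conv_app_nth)
        thus ?thesis by (simp add: psum_def)
      qed
      have e4: "tau m i T (xs[i:=d]) = sg (par m d * par m (xs!Suc i)) * T (ys[Suc i:=d])" for d
        using True e1 by (simp add: tau_def)
      show ?thesis unfolding f_def g_def e2 e3 e4 sum_distrib_left
      proof (intro sum.cong refl)
        fix b d
        show "A [xs ! i, b] * G b d * sg ((par m (xs ! i) + par m b) * psum m (take i xs)) *
          (sg (par m d * par m (xs ! Suc i)) * T (ys[Suc i := d])) =
          s * (A [xs ! i, b] * G b d * sg ((par m (xs ! i) + par m b) * (psum m (take i xs) + par m (xs ! Suc i))) *
           T (ys[Suc i := d]))"
        proof (cases "G b d = 0")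
          case False
          hence pbd: "par m d = par m b" using Gp by simp
          show ?thesis unfolding pbd s_def
            using sign1[where pb="par m b" and px="par m (xs!i)" and py="par m (xs!Suc i)" and P="psum m (take i xs)", OF par_le1 par_le1 par_le1]
            by (simp add: algebra_simps)
        qed simp
      qed
    qed
    have fi1: "f (Suc i) = s * g i"
    proof -
      have e1: "swapl i (xs[Suc i:=d]) = ys[i:=d]" for d
        using True by (simp add: ys_def swapl_def list_update_swap)
      have e2: "ys ! i = xs ! Suc i" using True by (simp add: ys_def swapl_def)
      have e3: "psum m (take (Suc i) xs) = psum m (take i xs) + par m (xs ! i)"
      proof -
        have "take (Suc i) xs = take i xs @ [xs ! i]"
          using True by (simp add: take_Suc_conv_app_nth)
        thus ?thesis by (simp add: psum_def)
      qed
      have e3': "psum m (take i ys) = psum m (take i xs)" using True take_swapl ys_def by simp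
      have e4: "tau m i T (xs[Suc i:=d]) = sg (par m (xs!i) * par m d) * T (ys[i:=d])" for d
        using True e1 by (simp add: tau_def)
      show ?thesis unfolding f_def g_def e2 e3 e3' e4 sum_distrib_left
      proof (intro sum.cong refl)
        fix b d
        show "A [xs ! Suc i, b] * G b d * sg ((par m (xs ! Suc i) + par m b) * (psum m (take i xs) + par m (xs ! i))) *
          (sg (par m (xs ! i) * par m d) * T (ys[i := d])) =
          s * (A [xs ! Suc i, b] * G b d * sg ((par m (xs ! Suc i) + par m b) * psum m (take i xs)) * T (ys[i := d]))"
        proof (cases "G b d = 0")
          case False
          hence pbd: "par m d = par m b" using Gp by simp
          show ?thesis unfolding pbd s_def
            using sign2[where pb="par m b" and px="par m (xs!i)" and py="par m (xs!Suc i)" and P="psum m (take i xs)", OF par_le1 par_le1 par_le1]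
            by (simp add: algebra_simps)
        qed simp
      qed
    qed
    have "sum f {..<length xs} = s * sum g {..<length xs}"
      unfolding sum_split2[OF True, of f] sum_split2[OF True, of g] fi fi1
      using fo by (simp add: algebra_simps sum_distrib_left)
    then show ?thesis using lhs rhs by simp
  qed
qed

definition tp :: "(nat list \<Rightarrow> complex) \<Rightarrow> nat \<Rightarrow> (nat list \<Rightarrow> complex) \<Rightarrow> nat list \<Rightarrow> complex" where
  "tp S k T xs = S (take k xs) * T (drop k xs)"

lemma sum_lessThan_add: "(\<Sum>j<k+(l::nat). f j) = (\<Sum>j<k. f j) + (\<Sum>j<l. f (k+j))"
  by (induction l) (simp_all add: add.assoc)

lemma sg_even_shift: "even P1 \<Longrightarrow> sg (q*(P1+P2)) = sg (q*P2)"
  by (simp add: sg_if algebra_simps)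

lemma act_tp:
  assumes Sk: "\<And>ys. S ys \<noteq> 0 \<Longrightarrow> length ys = k"
    and Se: "\<And>ys. S ys \<noteq> 0 \<Longrightarrow> even (psum m ys)"
  shows "act m n G A (tp S k T) = (\<lambda>xs. tp (act m n G A S) k T xs + tp S k (act m n G A T) xs)"
proof (rule ext)
  fix xs
  have S0: "length ys \<noteq> k \<Longrightarrow> S ys = 0" for ys using Sk by blast
  show "act m n G A (tp S k T) xs = tp (act m n G A S) k T xs + tp S k (act m n G A T) xs"
  proof (cases "length xs < k")
    case True
    then show ?thesis by (simp add: act_def tp_def S0)
  next
    case False
    obtain us vs where xs: "xs = us @ vs" and us: "length us = k"
      using False by (metis append_take_drop_id le_less_linear length_take min_absorb2)
    have "act m n G A (tp S k T) xs =
       (\<Sum>j<k. \<Sum>b<dimV m n. \<Sum>d<dimV m n. A [us!j, b] * G b d * sg ((par m (us!j) + par m b) * psum m (take j us)) * (S (us[j:=d]) * T vs))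
     + (\<Sum>j<length vs. \<Sum>b<dimV m n. \<Sum>d<dimV m n. A [vs!j, b] * G b d * sg ((par m (vs!j) + par m b) * (psum m us + psum m (take j vs))) * (S us * T (vs[j:=d])))"
      unfolding act_def xs length_append us sum_lessThan_add
      by (simp add: tp_def us nth_append list_update_append psum_append)
    also have "\<dots> = tp (act m n G A S) k T xs + tp S k (act m n G A T) xs"
    proof -
      have 1: "(\<Sum>j<k. \<Sum>b<dimV m n. \<Sum>d<dimV m n. A [us!j, b] * G b d * sg ((par m (us!j) + par m b) * psum m (take j us)) * (S (us[j:=d]) * T vs))
         = act m n G A S us * T vs"
        unfolding act_def us by (simp add: sum_distrib_left sum_distrib_right algebra_simps)
      have 2: "(\<Sum>j<length vs. \<Sum>b<dimV m n. \<Sum>d<dimV m n. A [vs!j, b] * G b d * sg ((par m (vs!j) + par m b) * (psum m us + psum m (take j vs))) * (S us * T (vs[j:=d])))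
         = S us * act m n G A T vs"
      proof (cases "S us = 0")
        case False
        hence ev: "even (psum m us)" using Se by blast
        show ?thesis unfolding act_def sg_even_shift[OF ev] by (simp add: sum_distrib_left algebra_simps)
      qed simp
      show ?thesis unfolding 1 2 by (simp add: tp_def xs us)
    qed
    finally show ?thesis .
  qed
qed

definition H2 :: "(nat \<Rightarrow> nat \<Rightarrow> complex) \<Rightarrow> nat list \<Rightarrow> complex" where
  "H2 G xs = (case xs of [x,y] \<Rightarrow> G y x | _ \<Rightarrow> 0)"

lemma H2_len: "H2 G ys \<noteq> 0 \<Longrightarrow> length ys = 2"
  unfolding H2_def by (auto split: list.splits)

lemma osp_p1: "osp_metric m n G \<Longrightarrow> \<forall>a b. (dimV m n \<le> a \<or> dimV m n \<le> b \<or> par m a \<noteq> par m b) \<longrightarrow> G a b = 0"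
  unfolding osp_metric_def by (erule conjunct1)
lemma osp_p2: "osp_metric m n G \<Longrightarrow> \<forall>a b. G b a = sg (par m a * par m b) * G a b"
  unfolding osp_metric_def by (erule conjunct2[THEN conjunct1])
lemma osp_p3: "osp_metric m n G \<Longrightarrow> \<forall>b c. b < dimV m n \<longrightarrow> c < dimV m n \<longrightarrow>
        (\<Sum>a<dimV m n. G a c * G a b) = (if c = b then 1 else 0)"
  unfolding osp_metric_def by (erule conjunct2[THEN conjunct2])

lemma osp_z: "osp_metric m n G \<Longrightarrow> G a b \<noteq> 0 \<Longrightarrow> a < dimV m n \<and> b < dimV m n \<and> par m a = par m b"
  apply (drule osp_p1) apply (erule allE[of _ a]) apply (erule allE[of _ b]) by auto
lemma osp_s: "osp_metric m n G \<Longrightarrow> G b a = sg (par m a * par m b) * G a b"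
  apply (drule osp_p2) by (erule allE[of _ a], erule allE[of _ b])
lemma osp_i: "osp_metric m n G \<Longrightarrow> b < dimV m n \<Longrightarrow> c < dimV m n \<Longrightarrow>
   (\<Sum>a<dimV m n. G a c * G a b) = (if c = b then 1 else 0)"
  apply (drule osp_p3) by auto

lemma sg_sq: "p \<le> 1 \<Longrightarrow> sg (p * p) = sg p"
  by (cases p) auto

lemma sg_nz[simp]: "sg k \<noteq> 0" by (simp add: sg_def)

lemma sg_sq1: "sg p * sg p = 1"
  by (simp add: sg_def power_mult_distrib[symmetric])

lemma sg_cancel: "sg q * a * (sg q * c) = a * c"
proof -
  have "sg q * a * (sg q * c) = (sg q * sg q) * (a * c)" by (simp only: mult_ac)
  thus ?thesis by (simp add: sg_sq1)
qed

lemma GG1: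
  assumes G: "osp_metric m n G" and b: "b < dimV m n"
  shows "(\<Sum>d<dimV m n. G b d * G y d) = (if b = y then 1 else 0)"
proof (cases "y < dimV m n")
  case False
  hence "G y d = 0" for d using osp_z[OF G] by blast
  then show ?thesis using False b by auto
next
  case True
  have "(\<Sum>d<dimV m n. G b d * G y d) = (\<Sum>d<dimV m n. G d b * G d y)"
  proof (intro sum.cong refl)
    fix d
    show "G b d * G y d = G d b * G d y"
    proof (cases "G b d * G y d = 0")
      case True
      then show ?thesis using osp_s[OF G, of b d] osp_s[OF G, of y d] by auto
    next
      case False
      hence p: "par m b = par m d" "par m y = par m d" using osp_z[OF G, of b d] osp_z[OF G, of y d] by auto
      show ?thesis unfolding osp_s[OF G, of b d] osp_s[OF G, of y d] p
        by (rule sg_cancel)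
    qed
  qed
  also have "\<dots> = (if b = y then 1 else 0)" using osp_i[OF G True b] by simp
  finally show ?thesis .
qed

lemma GG2:
  assumes G: "osp_metric m n G" and b: "b < dimV m n"
  shows "(\<Sum>d<dimV m n. G b d * G d x) = (if b = x then sg (par m b) else 0)"
proof (cases "x < dimV m n")
  case False
  hence "G d x = 0" for d using osp_z[OF G] by blast
  then show ?thesis using False b by auto
next
  case True
  have "(\<Sum>d<dimV m n. G b d * G d x) = (\<Sum>d<dimV m n. sg (par m b) * (G d b * G d x))"
  proof (intro sum.cong refl)
    fix d
    show "G b d * G d x = sg (par m b) * (G d b * G d x)"
    proof (cases "G b d = 0")
      case True
      then show ?thesis using osp_s[OF G, of b d] by auto
    next
      case False
      hence p: "par m d = par m b" using osp_z[OF G, of b d] by auto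
      show ?thesis unfolding osp_s[OF G, of b d] p sg_sq[OF par_le1] by simp
    qed
  qed
  also have "\<dots> = (if b = x then sg (par m b) else 0)" using osp_i[OF G True b]
    by (simp add: sum_distrib_left[symmetric])
  finally show ?thesis .
qed

lemma sg_magic: "sg (a*b) * (sg ((a+b)*b) * sg b) = 1"
proof -
  have e: "a*b + (a+b)*b + b = 2*(a*b) + b*(b+1)" by (simp add: algebra_simps)
  have "even (a*b + (a+b)*b + b)" unfolding e by simp
  hence "sg (a*b + (a+b)*b + b) = 1" by (simp add: sg_if)
  thus ?thesis by (simp add: sg_add mult.assoc)
qed

lemma act_H2:
  assumes G: "osp_metric m n G" and A: "in_g m n A"
  shows "act m n G A (H2 G) = (\<lambda>_. 0)"
proof (rule ext)
  fix xs
  show "act m n G A (H2 G) xs = 0"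
  proof (cases "length xs = 2")
    case False
    hence "H2 G (xs[j:=d]) = 0" for j d using H2_len by fastforce
    then show ?thesis by (simp add: act_def)
  next
    case True
    then obtain x y where xs: "xs = [x,y]"
      by (auto simp: length_Suc_conv numeral_2_eq_2)
    have At: "A [a,b] \<noteq> 0 \<Longrightarrow> a < dimV m n \<and> b < dimV m n" for a b
      using A[unfolded in_g_def, THEN conjunct1, unfolded is_tensor_def, rule_format, of "[a,b]"] by auto
    have j0: "(\<Sum>b<dimV m n. \<Sum>d<dimV m n. A [x,b] * G b d * sg ((par m x + par m b) * psum m []) * G y d)
        = (\<Sum>b<dimV m n. A [x,b] * (if b = y then 1 else 0))"
    proof (intro sum.cong refl)
      fix b assume b: "b \<in> {..<dimV m n}"
      have "(\<Sum>d<dimV m n. A [x,b] * G b d * sg ((par m x + par m b) * psum m []) * G y d) = A [x,b] * (\<Sum>d<dimV m n. G b d * G y d)"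
        by (simp add: psum_def sg_def sum_distrib_left mult.assoc)
      then show "(\<Sum>d<dimV m n. A [x,b] * G b d * sg ((par m x + par m b) * psum m []) * G y d) = A [x,b] * (if b = y then 1 else 0)"
        using GG1[OF G] b by simp
    qed
    have j1: "(\<Sum>b<dimV m n. \<Sum>d<dimV m n. A [y,b] * G b d * sg ((par m y + par m b) * psum m [x]) * G d x)
        = (\<Sum>b<dimV m n. A [y,b] * sg ((par m y + par m b) * par m x) * (if b = x then sg (par m b) else 0))"
    proof (intro sum.cong refl)
      fix b assume b: "b \<in> {..<dimV m n}"
      have "(\<Sum>d<dimV m n. A [y,b] * G b d * sg ((par m y + par m b) * psum m [x]) * G d x) = A [y,b] * sg ((par m y + par m b) * par m x) * (\<Sum>d<dimV m n. G b d * G d x)"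
        by (simp add: psum_def sum_distrib_left mult_ac)
      then show "(\<Sum>d<dimV m n. A [y,b] * G b d * sg ((par m y + par m b) * psum m [x]) * G d x) = A [y,b] * sg ((par m y + par m b) * par m x) * (if b = x then sg (par m b) else 0)"
        using GG2[OF G] b by simp
    qed
    have "act m n G A (H2 G) xs = (\<Sum>b<dimV m n. A [x,b] * (if b = y then 1 else 0))
       + (\<Sum>b<dimV m n. A [y,b] * sg ((par m y + par m b) * par m x) * (if b = x then sg (par m b) else 0))"
      unfolding j0[symmetric] j1[symmetric] xs act_def by (simp add: numeral_2_eq_2 H2_def)
    also have "\<dots> = (if y < dimV m n then A [x,y] else 0) + (if x < dimV m n then A [y,x] * sg ((par m y + par m x) * par m x) * sg (par m x) else 0)"
      by (simp add: if_distrib sum.delta' cong: if_cong)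
    also have "\<dots> = 0"
    proof (cases "x < dimV m n \<and> y < dimV m n")
      case True
      have "A [y,x] = - sg (par m y * par m x) * A [x,y]" using A[unfolded in_g_def, THEN conjunct2, rule_format, of y x] by simp
      then show ?thesis using True sg_magic[of "par m y" "par m x"] by (simp add: algebra_simps)
    next
      case False
      then show ?thesis using At by auto
    qed
    finally show ?thesis .
  qed
qed

fun taus :: "nat \<Rightarrow> nat list \<Rightarrow> (nat list \<Rightarrow> complex) \<Rightarrow> nat list \<Rightarrow> complex" where
  "taus m [] T = T"
| "taus m (i#is) T = tau m i (taus m is T)"

lemma act_taus:
  assumes Gp: "\<And>b d. G b d \<noteq> 0 \<Longrightarrow> par m b = par m d"
  shows "act m n G A (taus m is T) = taus m is (act m n G A T)"
  by (induction "is") (simp_all add: act_tau[OF Gp])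

lemma taus_perm: "\<exists>c ys. (\<forall>T. taus m is T xs = c * T ys) \<and> mset ys = mset xs"
proof (induction "is" arbitrary: xs)
  case Nil
  show ?case by (rule exI[of _ 1], rule exI[of _ xs]) simp
next
  case (Cons i "is")
  show ?case
  proof (cases "Suc i < length xs")
    case True
    obtain c ys where h: "\<forall>T. taus m is T (swapl i xs) = c * T ys" "mset ys = mset (swapl i xs)"
      using Cons by blast
    show ?thesis
      apply (rule exI[of _ "sg (par m (xs!i) * par m (xs!Suc i)) * c"], rule exI[of _ ys])
      using h True mset_swapl[OF True] by (simp add: tau_def)
  next
    case False
    obtain c ys where h: "\<forall>T. taus m is T xs = c * T ys" "mset ys = mset xs"
      using Cons by blast
    show ?thesis
      apply (rule exI[of _ c], rule exI[of _ ys])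
      using h False by (simp add: tau_def)
  qed
qed

lemma act_add: "act m n G A (\<lambda>xs. S xs + T xs) = (\<lambda>xs. act m n G A S xs + act m n G A T xs)"
  unfolding act_def by (simp add: algebra_simps sum.distrib)

lemma act_smult: "act m n G A (\<lambda>xs. c * T xs) = (\<lambda>xs. c * act m n G A T xs)"
  unfolding act_def by (simp add: algebra_simps sum_distrib_left)

lemma act_zero: "act m n G A (\<lambda>xs. 0) = (\<lambda>xs. 0)"
  unfolding act_def by simp

definition W :: "(nat \<Rightarrow> nat \<Rightarrow> complex) \<Rightarrow> (nat list \<Rightarrow> complex) \<Rightarrow> nat list \<Rightarrow> complex" where
  "W G X = tp (H2 G) 2 (tp (H2 G) 2 X)"

lemma H2_even: assumes G: "osp_metric m n G" and h: "H2 G ys \<noteq> 0" shows "even (psum m ys)"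
proof -
  obtain x y where ys: "ys = [x,y]" and g: "G y x \<noteq> 0"
    using h unfolding H2_def by (auto split: list.splits)
  have "par m y = par m x" using osp_z[OF G g] by simp
  thus ?thesis by (simp add: ys psum_def)
qed

lemma act_W:
  assumes G: "osp_metric m n G" and A: "in_g m n A"
  shows "act m n G A (W G X) = W G (act m n G A X)"
proof -
  have l: "\<And>ys. H2 G ys \<noteq> 0 \<Longrightarrow> length ys = 2" by (rule H2_len)
  have e: "\<And>ys. H2 G ys \<noteq> 0 \<Longrightarrow> even (psum m ys)" using H2_even[OF G] by blast
  have 1: "act m n G A (tp (H2 G) 2 T) = tp (H2 G) 2 (act m n G A T)" for T
  proof -
    have "act m n G A (tp (H2 G) 2 T) = (\<lambda>xs. tp (act m n G A (H2 G)) 2 T xs + tp (H2 G) 2 (act m n G A T) xs)"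
      by (rule act_tp[OF l e])
    also have "\<dots> = tp (H2 G) 2 (act m n G A T)" unfolding act_H2[OF G A] by (simp add: tp_def fun_eq_iff)
    finally show ?thesis .
  qed
  show ?thesis unfolding W_def 1 ..
qed

definition FFL :: "nat \<Rightarrow> (complex \<times> nat list) list \<Rightarrow> (nat \<Rightarrow> nat \<Rightarrow> complex) \<Rightarrow> (nat list \<Rightarrow> complex) \<Rightarrow> nat list \<Rightarrow> complex" where
  "FFL m L G X = (\<lambda>xs. sum_list (map (\<lambda>(c,is). c * taus m is (W G X) xs) L))"

lemma act_FFL:
  assumes G: "osp_metric m n G" and A: "in_g m n A"
  shows "act m n G A (FFL m L G X) = FFL m L G (act m n G A X)"
proof (induction L)
  case Nil
  then show ?case by (simp add: FFL_def act_zero)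
next
  case (Cons a L)
  obtain c "is" where a: "a = (c, is)" by (cases a)
  have Gp: "\<And>b d. G b d \<noteq> 0 \<Longrightarrow> par m b = par m d" using osp_z[OF G] by blast
  have "FFL m (a#L) G X = (\<lambda>xs. c * taus m is (W G X) xs + FFL m L G X xs)"
    by (simp add: FFL_def a)
  moreover have "FFL m (a#L) G (act m n G A X) = (\<lambda>xs. c * taus m is (W G (act m n G A X)) xs + FFL m L G (act m n G A X) xs)"
    by (simp add: FFL_def a)
  ultimately show ?case using Cons
    by (simp add: act_add act_smult act_taus[OF Gp] act_W[OF G A])
qed



definition Lc :: "(complex \<times> nat list) list" where
  "Lc = [(1, [1,3]), (-1, [1,4,3]), (-1, [1,2,3]), (1, [1,2,4,3]), (-1, [2,1,3]), (1, [2,1,4,3]), (1, [1,2,1,3]), (-1, [1,2,1,4,3]), (-1, [3,2,1]), (1, [2,3,2,1]), (4, [3,2,1,4,3]), (1, [4,3,2,1]), (-1, [2,4,3,2,1]), (-4, [3,2,4,3,2,1]), (1, [0,1,2,3]), (-1, [0,1,2,4,3]), (-1, [0,1,2,1,3]), (1, [0,1,2,1,4,3]), (-4, [1,0,2,1,3,2,1,4,3]), (4, [1,0,2,1,3,2,4,3,2,1])]"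

lemma phi_core:
  assumes G: "osp_metric m n G"
    and Xs: "\<And>u v. X [u,v] = - sg (par m u * par m v) * X [v,u]"
  shows "q_op m (s_op m (\<lambda>ys. FFL m Lc G X (e#f#ys))) [a,b,c,d] = 0"
proof -
  have Gz: "\<And>u v. par m u \<noteq> par m v \<Longrightarrow> G u v = 0" using osp_z[OF G] by blast
  show ?thesis
    unfolding q_op_def s_op_def FFL_def Lc_def W_def tp_def H2_def
    apply (simp add: tau_def swapl_def)
    apply (cases "a < m"; cases "b < m"; cases "c < m"; cases "d < m"; cases "e < m"; cases "f < m")
    apply (simp_all add: par_def sg_def osp_s[OF G, of b a] Xs[of b a] osp_s[OF G, of c a] Xs[of c a] osp_s[OF G, of d a] Xs[of d a] osp_s[OF G, of e a] Xs[of e a] osp_s[OF G, of f a] Xs[of f a] osp_s[OF G, of c b] Xs[of c b] osp_s[OF G, of d b] Xs[of d b] osp_s[OF G, of e b] Xs[of e b] osp_s[OF G, of f b] Xs[of f b] osp_s[OF G, of d c] Xs[of d c] osp_s[OF G, of e c] Xs[of e c] osp_s[OF G, of f c] Xs[of f c] osp_s[OF G, of e d] Xs[of e d] osp_s[OF G, of f d] Xs[of f d] osp_s[OF G, of f e] Xs[of f e] Gz[of a b] Gz[of a c] Gz[of a d] Gz[of a e] Gz[of a f] Gz[of b a] Gz[of b c] Gz[of b d] Gz[of b e] Gz[of b f] Gz[of c a] Gz[of c b] Gz[of c d] Gz[of c e] Gz[of c f] Gz[of d a] Gz[of d b] Gz[of d c] Gz[of d e] Gz[of d f] Gz[of e a]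 Gz[of e b] Gz[of e c] Gz[of e d] Gz[of e f] Gz[of f a] Gz[of f b] Gz[of f c] Gz[of f d] Gz[of f e])
    apply (simp_all add: field_simps algebra_simps)
    done
qed

lemma wedge_w1:
  assumes G: "osp_metric m n G"
    and Xs: "\<And>u v. X [u,v] = - sg (par m u * par m v) * X [v,u]"
  shows "FFL m Lc G X [a,b,c,d,e,f] = - sg (par m a * par m b) * FFL m Lc G X [b,a,c,d,e,f]"
proof -
  have Gz: "\<And>u v. par m u \<noteq> par m v \<Longrightarrow> G u v = 0" using osp_z[OF G] by blast
  show ?thesis
    unfolding FFL_def Lc_def W_def tp_def H2_def
    apply (simp add: tau_def swapl_def)
    apply (cases "a < m"; cases "b < m"; cases "c < m"; cases "d < m"; cases "e < m"; cases "f < m")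
    apply (simp_all add: par_def sg_def osp_s[OF G, of b a] Xs[of b a] osp_s[OF G, of c a] Xs[of c a] osp_s[OF G, of d a] Xs[of d a] osp_s[OF G, of e a] Xs[of e a] osp_s[OF G, of f a] Xs[of f a] osp_s[OF G, of c b] Xs[of c b] osp_s[OF G, of d b] Xs[of d b] osp_s[OF G, of e b] Xs[of e b] osp_s[OF G, of f b] Xs[of f b] osp_s[OF G, of d c] Xs[of d c] osp_s[OF G, of e c] Xs[of e c] osp_s[OF G, of f c] Xs[of f c] osp_s[OF G, of e d] Xs[of e d] osp_s[OF G, of f d] Xs[of f d] osp_s[OF G, of f e] Xs[of f e] Gz[of a b] Gz[of a c] Gz[of a d] Gz[of a e] Gz[of a f] Gz[of b a] Gz[of b c] Gz[of b d] Gz[of b e] Gz[of b f] Gz[of c a] Gz[of c b] Gz[of c d] Gz[of c e] Gz[of c f] Gz[of d a] Gz[of d b] Gz[of d c] Gz[of d e] Gz[of d f] Gz[of e a] Gz[of e b] Gz[of e c] Gz[of e d] Gz[of e f] Gz[of f a] Gz[of f b] Gz[of f c] Gz[of f d] Gz[of f e])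
    done
qed

lemma wedge_w2:
  assumes G: "osp_metric m n G"
    and Xs: "\<And>u v. X [u,v] = - sg (par m u * par m v) * X [v,u]"
  shows "FFL m Lc G X [a,b,c,d,e,f] = - sg (par m c * par m d) * FFL m Lc G X [a,b,d,c,e,f]"
proof -
  have Gz: "\<And>u v. par m u \<noteq> par m v \<Longrightarrow> G u v = 0" using osp_z[OF G] by blast
  show ?thesis
    unfolding FFL_def Lc_def W_def tp_def H2_def
    apply (simp add: tau_def swapl_def)
    apply (cases "a < m"; cases "b < m"; cases "c < m"; cases "d < m"; cases "e < m"; cases "f < m")
    apply (simp_all add: par_def sg_def osp_s[OF G, of b a] Xs[of b a] osp_s[OF G, of c a] Xs[of c a] osp_s[OF G, of d a] Xs[of d a] osp_s[OF G, of e a] Xs[of e a] osp_s[OF G, of f a] Xs[of f a] osp_s[OF G, of c b] Xs[of c b] osp_s[OF G, of d b] Xs[of d b] osp_s[OF G, of e b] Xs[of e b] osp_s[OF G, of f b] Xs[of f b] osp_s[OF G, of d c] Xs[of d c] osp_s[OF G, of e c] Xs[of e c] osp_s[OF G, of f c] Xs[of f c] osp_s[OF G, of e d] Xs[of e d] osp_s[OF G, of f d] Xs[of f d] osp_s[OF G, of f e] Xs[of f e] Gz[of a b] Gz[of a c] Gz[of a d] Gz[of a e] Gz[of a f] Gz[of b a] Gz[of b c] Gz[of b d] Gz[of b e] Gz[of b f] Gz[of c a] Gz[of c b] Gz[of c d] Gz[of c e] Gz[of c f] Gz[of d a] Gz[of d b] Gz[of d c] Gz[of d e] Gz[of d f]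 Gz[of e a] Gz[of e b] Gz[of e c] Gz[of e d] Gz[of e f] Gz[of f a] Gz[of f b] Gz[of f c] Gz[of f d] Gz[of f e])
    done
qed

lemma wedge_w3:
  assumes G: "osp_metric m n G"
    and Xs: "\<And>u v. X [u,v] = - sg (par m u * par m v) * X [v,u]"
  shows "FFL m Lc G X [a,b,c,d,e,f] = - sg (par m e * par m f) * FFL m Lc G X [a,b,c,d,f,e]"
proof -
  have Gz: "\<And>u v. par m u \<noteq> par m v \<Longrightarrow> G u v = 0" using osp_z[OF G] by blast
  show ?thesis
    unfolding FFL_def Lc_def W_def tp_def H2_def
    apply (simp add: tau_def swapl_def)
    apply (cases "a < m"; cases "b < m"; cases "c < m"; cases "d < m"; cases "e < m"; cases "f < m")
    apply (simp_all add: par_def sg_def osp_s[OF G, of b a] Xs[of b a] osp_s[OF G, of c a] Xs[of c a] osp_s[OF G, of d a] Xs[of d a] osp_s[OF G, of e a] Xs[of e a] osp_s[OF G, of f a] Xs[of f a] osp_s[OF G, of c b] Xs[of c b] osp_s[OF G, of d b] Xs[of d b] osp_s[OF G, of e b] Xs[of e b] osp_s[OF G, of f b] Xs[of f b] osp_s[OF G, of d c] Xs[of d c] osp_s[OF G, of e c] Xs[of e c] osp_s[OF G, of f c] Xs[of f c] osp_s[OF G, of e d] Xs[of e d] osp_s[OF G, of f d] Xs[of f d] osp_s[OF G, of f e] Xs[of f e] Gz[of a b] Gz[of a c] Gz[of a d] Gz[of a e] Gz[of a f] Gz[of b a] Gz[of b c] Gz[of b d] Gz[of b e] Gz[of b f]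 Gz[of c a] Gz[of c b] Gz[of c d] Gz[of c e] Gz[of c f] Gz[of d a] Gz[of d b] Gz[of d c] Gz[of d e] Gz[of d f] Gz[of e a] Gz[of e b] Gz[of e c] Gz[of e d] Gz[of e f] Gz[of f a] Gz[of f b] Gz[of f c] Gz[of f d] Gz[of f e])
    done
qed

lemma wedge_w4:
  assumes G: "osp_metric m n G"
    and Xs: "\<And>u v. X [u,v] = - sg (par m u * par m v) * X [v,u]"
  shows "FFL m Lc G X [a,b,c,d,e,f] = - sg ((par m a + par m b) * (par m c + par m d)) * FFL m Lc G X [c,d,a,b,e,f]"
proof -
  have Gz: "\<And>u v. par m u \<noteq> par m v \<Longrightarrow> G u v = 0" using osp_z[OF G] by blast
  show ?thesis
    unfolding FFL_def Lc_def W_def tp_def H2_def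
    apply (simp add: tau_def swapl_def)
    apply (cases "a < m"; cases "b < m"; cases "c < m"; cases "d < m"; cases "e < m"; cases "f < m")
    apply (simp_all add: par_def sg_def osp_s[OF G, of b a] Xs[of b a] osp_s[OF G, of c a] Xs[of c a] osp_s[OF G, of d a] Xs[of d a] osp_s[OF G, of e a] Xs[of e a] osp_s[OF G, of f a] Xs[of f a] osp_s[OF G, of c b] Xs[of c b] osp_s[OF G, of d b] Xs[of d b] osp_s[OF G, of e b] Xs[of e b] osp_s[OF G, of f b] Xs[of f b] osp_s[OF G, of d c] Xs[of d c] osp_s[OF G, of e c] Xs[of e c] osp_s[OF G, of f c] Xs[of f c] osp_s[OF G, of e d] Xs[of e d] osp_s[OF G, of f d] Xs[of f d] osp_s[OF G, of f e] Xs[of f e] Gz[of a b] Gz[of a c] Gz[of a d] Gz[of a e] Gz[of a f] Gz[of b a] Gz[of b c] Gz[of b d] Gz[of b e] Gz[of b f] Gz[of c a] Gz[of c b] Gz[of c d] Gz[of c e] Gz[of c f] Gz[of d a] Gz[of d b] Gz[of d c] Gz[of d e] Gz[of d f] Gz[of e a] Gz[of e b] Gz[of e c] Gz[of e d] Gz[of e f] Gz[of f a] Gz[of f b] Gz[of f c] Gz[of f d] Gz[of f e])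
    done
qed


lemma taus_add: "taus m is (\<lambda>xs. S xs + T xs) xs = taus m is S xs + taus m is T xs"
proof -
  obtain c ys where "\<forall>T. taus m is T xs = c * T ys" using taus_perm by blast
  thus ?thesis by (simp add: algebra_simps)
qed

lemma taus_smult: "taus m is (\<lambda>xs. k * T xs) xs = k * taus m is T xs"
proof -
  obtain c ys where "\<forall>T. taus m is T xs = c * T ys" using taus_perm by blast
  thus ?thesis by (simp add: algebra_simps)
qed

lemma W_add: "W G (\<lambda>xs. X xs + Y xs) = (\<lambda>xs. W G X xs + W G Y xs)"
  unfolding W_def tp_def by (simp add: algebra_simps)

lemma W_smult: "W G (\<lambda>xs. k * X xs) = (\<lambda>xs. k * W G X xs)"
  unfolding W_def tp_def by (simp add: algebra_simps)

lemma FFL_add: "FFL m L G (\<lambda>xs. X xs + Y xs) = (\<lambda>xs. FFL m L G X xs + FFL m L G Y xs)"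
proof (rule ext)
  fix xs show "FFL m L G (\<lambda>xs. X xs + Y xs) xs = FFL m L G X xs + FFL m L G Y xs"
    by (induction L) (auto simp: FFL_def W_add taus_add algebra_simps)
qed

lemma FFL_smult: "FFL m L G (\<lambda>xs. k * X xs) = (\<lambda>xs. k * FFL m L G X xs)"
proof (rule ext)
  fix xs show "FFL m L G (\<lambda>xs. k * X xs) xs = k * FFL m L G X xs"
    by (induction L) (auto simp: FFL_def W_smult taus_smult algebra_simps)
qed

lemma FFL_supp:
  assumes F: "FFL m L G X xs \<noteq> 0"
    and W: "\<And>ys. W G X ys \<noteq> 0 \<Longrightarrow> P ys"
    and Pm: "\<And>xs ys. mset xs = mset ys \<Longrightarrow> P ys \<Longrightarrow> P xs"
  shows "P xs"
  using F
proof (induction L)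
  case Nil
  then show ?case by (simp add: FFL_def)
next
  case (Cons a L)
  obtain c "is" where a: "a = (c, is)" by (cases a)
  have "c * taus m is (W G X) xs + FFL m L G X xs \<noteq> 0" using Cons.prems by (simp add: FFL_def a)
  then show ?case
  proof (cases "FFL m L G X xs = 0")
    case True
    hence "taus m is (W G X) xs \<noteq> 0" using \<open>c * taus m is (W G X) xs + FFL m L G X xs \<noteq> 0\<close> by auto
    moreover obtain k ys where k: "\<forall>T. taus m is T xs = k * T ys" and ys: "mset ys = mset xs" using taus_perm by blast
    ultimately have "W G X ys \<noteq> 0" by simp
    hence "P ys" by (rule W)
    thus ?thesis using Pm ys by metis
  next
    case False
    then show ?thesis using Cons.IH by blast
  qed
qed

lemma W_supp:
  assumes "W G X ys \<noteq> 0"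
  shows "H2 G (take 2 ys) \<noteq> 0" "H2 G (take 2 (drop 2 ys)) \<noteq> 0" "X (drop 2 (drop 2 ys)) \<noteq> 0"
  using assms unfolding W_def tp_def by auto

lemma H2_lt: "osp_metric m n G \<Longrightarrow> H2 G ys \<noteq> 0 \<Longrightarrow> \<forall>x\<in>set ys. x < dimV m n"
  unfolding H2_def using osp_z[of m n G] by (auto split: list.splits)

lemma split3: "ys = take 2 ys @ take 2 (drop 2 ys) @ drop 2 (drop 2 ys)"
  by (simp only: append_take_drop_id)

lemma FFL_homog:
  assumes G: "osp_metric m n G" and h: "homog m p X"
  shows "homog m p (FFL m L G X)"
  unfolding homog_def
proof (intro allI impI)
  fix xs assume "FFL m L G X xs \<noteq> 0"
  then show "psum m xs mod 2 = p"
  proof (rule FFL_supp[where P = "\<lambda>xs. psum m xs mod 2 = p"])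
    fix ys assume w: "W G X ys \<noteq> 0"
    have e1: "even (psum m (take 2 ys))" using H2_even[OF G W_supp(1)[OF w]] .
    have e2: "even (psum m (take 2 (drop 2 ys)))" using H2_even[OF G W_supp(2)[OF w]] .
    have e3: "psum m (drop 2 (drop 2 ys)) mod 2 = p" using h W_supp(3)[OF w] unfolding homog_def by blast
    have "psum m ys = psum m (take 2 ys) + psum m (take 2 (drop 2 ys)) + psum m (drop 2 (drop 2 ys))"
      by (subst split3) (simp add: psum_append)
    then show "psum m ys mod 2 = p" using e1 e2 e3 by (auto elim!: evenE simp: mod_add_left_eq[symmetric])
  next
    fix xs ys :: "nat list" assume "mset xs = mset ys" "psum m ys mod 2 = p"
    then show "psum m xs mod 2 = p" using psum_mset by metis
  qed
qed

lemma FFL_tensor: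
  assumes G: "osp_metric m n G" and h: "is_tensor m n 2 X"
  shows "is_tensor m n 6 (FFL m L G X)"
  unfolding is_tensor_def
proof (intro allI impI)
  fix xs assume "FFL m L G X xs \<noteq> 0"
  then show "length xs = 6 \<and> (\<forall>x\<in>set xs. x < dimV m n)"
  proof (rule FFL_supp[where P = "\<lambda>xs. length xs = 6 \<and> (\<forall>x\<in>set xs. x < dimV m n)"])
    fix ys assume w: "W G X ys \<noteq> 0"
    have l1: "length (take 2 ys) = 2" using H2_len W_supp(1)[OF w] .
    have l2: "length (take 2 (drop 2 ys)) = 2" using H2_len W_supp(2)[OF w] .
    have s1: "\<forall>x\<in>set (take 2 ys). x < dimV m n" using H2_lt[OF G W_supp(1)[OF w]] .
    have s2: "\<forall>x\<in>set (take 2 (drop 2 ys)). x < dimV m n" using H2_lt[OF G W_supp(2)[OF w]] .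
    have 3: "length (drop 2 (drop 2 ys)) = 2 \<and> (\<forall>x\<in>set (drop 2 (drop 2 ys)). x < dimV m n)"
      using h W_supp(3)[OF w] unfolding is_tensor_def by blast
    have "length ys = length (take 2 ys) + length (take 2 (drop 2 ys)) + length (drop 2 (drop 2 ys))"
      by (subst split3) simp
    moreover have "set ys = set (take 2 ys) \<union> set (take 2 (drop 2 ys)) \<union> set (drop 2 (drop 2 ys))"
      by (subst split3) auto
    ultimately show "length ys = 6 \<and> (\<forall>x\<in>set ys. x < dimV m n)" using l1 l2 s1 s2 3 by auto
  next
    fix xs ys :: "nat list" assume "mset xs = mset ys" "length ys = 6 \<and> (\<forall>x\<in>set ys. x < dimV m n)"
    then show "length xs = 6 \<and> (\<forall>x\<in>set xs. x < dimV m n)"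
      by (metis mset_eq_length set_mset_mset)
  qed
qed



lemma nonzero_val:
  assumes G: "osp_metric m n G" and m: "0 < m"
    and uv: "u < m" "v < m" "e < m" "m \<le> f" "u \<noteq> v" "u \<noteq> 0" "v \<noteq> 0" "u \<noteq> e" "v \<noteq> e"
    and ge: "G e 0 \<noteq> 0" and gf: "G f m \<noteq> 0"
    and Xuv: "X [u,v] = 1" and Xvu: "X [v,u] = -1"
    and X1: "\<And>x y. x \<noteq> u \<Longrightarrow> x \<noteq> v \<Longrightarrow> X [x,y] = 0"
    and X2: "\<And>x y. y \<noteq> u \<Longrightarrow> y \<noteq> v \<Longrightarrow> X [x,y] = 0"
  shows "FFL m Lc G X [u,v,0,m,e,f] \<noteq> 0"
proof -
  have Gz: "\<And>x y. par m x \<noteq> par m y \<Longrightarrow> G x y = 0" using osp_z[OF G] by blast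
  have ne: "m \<noteq> u" "m \<noteq> v" "f \<noteq> u" "f \<noteq> v" "e \<noteq> u" "e \<noteq> v" "0 \<noteq> u" "0 \<noteq> v"
    using uv by auto
  have p: "par m u = 0" "par m v = 0" "par m e = 0" "par m 0 = 0" "par m m = 1" "par m f = 1"
    using uv m by (auto simp: par_def)
  have z: "G 0 f = 0" "G f 0 = 0" "G m e = 0" "G e m = 0" "G 0 m = 0" "G m 0 = 0" "G e f = 0" "G f e = 0"
    by (rule Gz; simp add: p)+
  have xz: "X [0,m] = 0" "X [m,0] = 0" "X [0,e] = 0" "X [e,0] = 0" "X [0,f] = 0" "X [f,0] = 0"
     "X [m,e] = 0" "X [e,m] = 0" "X [m,f] = 0" "X [f,m] = 0" "X [e,f] = 0" "X [f,e] = 0"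
     "X [u,0] = 0" "X [0,u] = 0" "X [v,0] = 0" "X [0,v] = 0" "X [u,m] = 0" "X [m,u] = 0" "X [v,m] = 0" "X [m,v] = 0"
     "X [u,e] = 0" "X [e,u] = 0" "X [v,e] = 0" "X [e,v] = 0" "X [u,f] = 0" "X [f,u] = 0" "X [v,f] = 0" "X [f,v] = 0"
    using ne X1 X2 by metis+
  show ?thesis
    unfolding FFL_def Lc_def W_def tp_def H2_def
    apply (simp add: tau_def swapl_def)
    apply (simp add: p sg_def z xz Xuv Xvu ge gf)
    done
qed

lemma exists_nz:
  assumes G: "osp_metric m n G" and c: "c < dimV m n"
  shows "\<exists>a. G a c \<noteq> 0"
proof (rule ccontr)
  assume "\<not> (\<exists>a. G a c \<noteq> 0)"
  hence "(\<Sum>a<dimV m n. G a c * G a c) = 0" by simp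
  thus False using osp_i[OF G c c] by simp
qed

lemma Phi_zero:
  assumes G: "osp_metric m n G"
    and Xs: "\<And>u v. X [u,v] = - sg (par m u * par m v) * X [v,u]"
  shows "Phi m (FFL m Lc G X) = (\<lambda>_. 0)"
  unfolding Phi_def Pi2_def by (auto split: list.splits simp: phi_core[OF G Xs])

theorem lemma6p1:
  fixes m n :: nat and G :: "nat \<Rightarrow> nat \<Rightarrow> complex"
  assumes "m > 4" and "n > 1" and "osp_metric m n G"
  shows "\<exists>F \<in> Hom_g_ker_Phi m n G. \<exists>X. in_g m n X \<and> F X \<noteq> (\<lambda>_. 0)"
proof -
  note G = assms(3)
  have D: "m < dimV m n" using assms(2) by (simp add: dimV_def)
  have Xs_of: "\<And>X u v. in_g m n X \<Longrightarrow> X [u,v] = - sg (par m u * par m v) * X [v,u]"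
    unfolding in_g_def by (erule conjE) (erule allE, erule allE, assumption)
  have Xt_of: "\<And>X. in_g m n X \<Longrightarrow> is_tensor m n 2 X"
    unfolding in_g_def by (erule conjunct1)
  let ?F = "FFL m Lc G"
  have hom: "?F \<in> Hom_g_ker_Phi m n G"
    unfolding Hom_g_ker_Phi_def
  proof (intro CollectI conjI allI impI)
    fix X Y show "?F (\<lambda>xs. X xs + Y xs) = (\<lambda>xs. ?F X xs + ?F Y xs)" by (rule FFL_add)
  next
    fix X c show "?F (\<lambda>xs. c * X xs) = (\<lambda>xs. c * ?F X xs)" by (rule FFL_smult)
  next
    fix X assume X: "in_g m n X"
    note Xs = Xs_of[OF X]
    have t: "is_tensor m n 6 (?F X)" by (rule FFL_tensor[OF G Xt_of[OF X]])
    have p: "Phi m (?F X) = (\<lambda>_. 0)" by (rule Phi_zero[OF G Xs])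
    have w: "\<forall>a b c d e f.
        ?F X [a,b,c,d,e,f] = - sg (par m a * par m b) * ?F X [b,a,c,d,e,f] \<and>
        ?F X [a,b,c,d,e,f] = - sg (par m c * par m d) * ?F X [a,b,d,c,e,f] \<and>
        ?F X [a,b,c,d,e,f] = - sg (par m e * par m f) * ?F X [a,b,c,d,f,e] \<and>
        ?F X [a,b,c,d,e,f] = - sg ((par m a + par m b) * (par m c + par m d)) * ?F X [c,d,a,b,e,f]"
      by (intro allI conjI) (rule wedge_w1[OF G Xs] wedge_w2[OF G Xs] wedge_w3[OF G Xs] wedge_w4[OF G Xs])+
    show "ker_Phi m n (?F X)"
      unfolding ker_Phi_def in_wedge_g_def using t p w by (intro conjI)
  next
    fix X p assume "in_g m n X" "homog m p X"
    then show "homog m p (?F X)" by (intro FFL_homog[OF G])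
  next
    fix A X assume A: "in_g m n A" and "in_g m n X"
    show "?F (act m n G A X) = act m n G A (?F X)" by (rule act_FFL[OF G A, symmetric])
  qed
  have "0 < dimV m n" using D by simp
  then obtain e where ge: "G e 0 \<noteq> 0" using exists_nz[OF G] by blast
  have e: "e < m" using osp_z[OF G ge] assms(1) by (auto simp: par_def split: if_splits)
  obtain f where gf: "G f m \<noteq> 0" using exists_nz[OF G D] by blast
  have f: "m \<le> f" using osp_z[OF G gf] by (auto simp: par_def split: if_splits)
  obtain u v where uv: "u < m" "v < m" "u \<noteq> v" "u \<noteq> 0" "v \<noteq> 0" "u \<noteq> e" "v \<noteq> e"
  proof (cases "e = 1")
    case True then show ?thesis using that[of 2 3] assms(1) by auto
  next
    case False
    show ?thesis
    proof (cases "e = 2")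
      case True then show ?thesis using that[of 1 3] assms(1) by auto
    next
      case False
      then show ?thesis using that[of 1 2] assms(1) \<open>e \<noteq> 1\<close> by auto
    qed
  qed
  define X0 where "X0 = (\<lambda>xs :: nat list. if xs = [u,v] then (1::complex) else if xs = [v,u] then -1 else 0)"
  have X0t: "is_tensor m n 2 X0"
    unfolding is_tensor_def
  proof (intro allI impI)
    fix xs assume "X0 xs \<noteq> 0"
    hence "xs = [u,v] \<or> xs = [v,u]" unfolding X0_def by (auto split: if_splits)
    then show "length xs = 2 \<and> (\<forall>x\<in>set xs. x < dimV m n)" using uv D by auto
  qed
  have X0a: "\<forall>a b. X0 [a,b] = - sg (par m a * par m b) * X0 [b,a]"
  proof (intro allI)
    fix a b
    have pu: "par m u = 0" "par m v = 0" using uv by (auto simp: par_def)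
    show "X0 [a,b] = - sg (par m a * par m b) * X0 [b,a]"
      unfolding X0_def using uv pu by (auto simp: sg_def)
  qed
  have X0g: "in_g m n X0" unfolding in_g_def using X0t X0a by (rule conjI)
  have nz: "?F X0 [u,v,0,m,e,f] \<noteq> 0"
    by (rule nonzero_val[OF G _ uv(1,2) e f uv(3-7) ge gf]) (use uv assms(1) in \<open>auto simp: X0_def\<close>)
  show ?thesis
    using hom X0g nz by (metis)
qed


end
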